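(* Let $G$ be a simple undirected graph on the vertex set $[n]=\{1,\dots,n\}$, let $t$ be the number of triangles in $G$, and let $\Delta=\max_{e\in E(G)}\delta_e$, where $\delta_e$ is the number of triangles of $G$ containing the edge $e$. Let $N$ be a positive integer and $p=1/N$. Color each vertex of $G$ independently and uniformly at random with one of $N$ colors (so each vertex receives any given color with probability $p$), and let $T$ be the number of monochromatic triangles, i.e. triangles of $G$ all three of whose vertices receive the same color. If $$p \geq \max\left( \frac{\Delta \log n}{t}, \frac{\log n}{\sqrt{t}}\right),$$ then $T\sim \mathbb{E}[T]$ with probability $1-o(1)$; that is, for every constant $\epsilon>0$, $\Pr\big[|T-\mathbb{E}[T]|\geq \epsilon\,\mathbb{E}[T]\big]=o(1)$ as $n\to\infty$.
   Context: The statement is asymptotic: $G$ (and hence $t,\Delta$) and $p$ may depend on $n$, and $o(1)$ refers to $n\to\infty$. Here $\mathbb{E}[T]=p^2 t$. This random coloring is the sampling step of the "colorful triangle sampling" algorithm, which keeps exactly the monochromatic edges (edges whose endpoints receive the same color), counts the triangles $T$ among them, and outputs $T/p^2$ as an estimate of $t$. *)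

theory Defs
  imports "HOL-Probability.Probability"
begin

definition simple_graph_on :: "nat \<Rightarrow> nat set set \<Rightarrow> bool" where
  "simple_graph_on n E \<longleftrightarrow> (\<forall>e\<in>E. e \<subseteq> {1..n} \<and> card e = 2)"

definition triangles :: "nat \<Rightarrow> nat set set \<Rightarrow> nat set set" where
  "triangles n E = {S. S \<subseteq> {1..n} \<and> card S = 3 \<and>
                      (\<forall>x\<in>S. \<forall>y\<in>S. x \<noteq> y \<longrightarrow> {x, y} \<in> E)}"

definition num_triangles :: "nat \<Rightarrow> nat set set \<Rightarrow> nat" where
  "num_triangles n E = card (triangles n E)"

definition edge_tri_count :: "nat \<Rightarrow> nat set set \<Rightarrow> nat set \<Rightarrow> nat" where
  "edge_tri_count n E e = card {S \<in> triangles n E. e \<subseteq> S}"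

definition max_edge_tri :: "nat \<Rightarrow> nat set set \<Rightarrow> nat" where
  "max_edge_tri n E = (if E = {} then 0 else Max (edge_tri_count n E ` E))"

definition coloring :: "nat \<Rightarrow> nat \<Rightarrow> (nat \<Rightarrow> nat) pmf" where
  "coloring n N = Pi_pmf {1..n} 0 (\<lambda>_. pmf_of_set {0..<N})"

definition mono_triangles :: "nat \<Rightarrow> nat set set \<Rightarrow> (nat \<Rightarrow> nat) \<Rightarrow> nat" where
  "mono_triangles n E c = card {S \<in> triangles n E. \<exists>k. \<forall>v\<in>S. c v = k}"

end

theory Submission
  imports Defs "HOL-Real_Asymp.Real_Asymp"
begin

lemma set_coloring:
  assumes "N > 0"
  shows "set_pmf (coloring n N) = PiE_dflt {1..n} 0 (\<lambda>_. {0..<N})"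
  using assms by (simp add: coloring_def set_Pi_pmf o_def)

lemma finite_set_coloring:
  assumes "N > 0" shows "finite (set_pmf (coloring n N))"
  using assms by (simp add: set_coloring finite_PiE_dflt)

lemma prob_fix:
  assumes "N > 0" "A \<subseteq> {1..n}" "\<And>v. v \<in> A \<Longrightarrow> f v < N"
  shows "measure_pmf.prob (coloring n N) {c. \<forall>v\<in>A. c v = f v} = (1 / real N) ^ card A"
proof -
  define B where "B = (\<lambda>x. if x \<in> A then {f x} else (UNIV :: nat set))"
  have "{c. \<forall>v\<in>A. c v = f v} = Pi {1..n} B"
    using assms(2) by (auto simp: B_def Pi_def)
  hence "measure_pmf.prob (coloring n N) {c. \<forall>v\<in>A. c v = f v}
      = (\<Prod>x\<in>{1..n}. measure_pmf.prob (pmf_of_set {0..<N}) (B x))"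
    by (simp add: coloring_def measure_Pi_pmf_Pi)
  also have "\<dots> = (\<Prod>x\<in>{1..n}. if x \<in> A then 1 / real N else 1)"
    using assms by (intro prod.cong) (auto simp: B_def measure_pmf_of_set)
  also have "\<dots> = (1 / real N) ^ card A"
    using assms(2) by (simp add: prod.If_cases Int_absorb1)
  finally show ?thesis .
qed

lemma prob_mono:
  assumes "N > 0" "A \<subseteq> {1..n}" "A \<noteq> {}"
  shows "measure_pmf.prob (coloring n N) {c. \<exists>k. \<forall>v\<in>A. c v = k} = (1 / real N) ^ (card A - 1)"
proof -
  let ?P = "coloring n N"
  have fin: "finite A" using assms(2) finite_subset by blast
  have "measure_pmf.prob ?P {c. \<exists>k. \<forall>v\<in>A. c v = k}
      = measure_pmf.prob ?P (\<Union>k\<in>{0..<N}. {c. \<forall>v\<in>A. c v = k})"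
  proof (rule measure_prob_cong_0)
    fix c assume c: "c \<in> {c. \<exists>k. \<forall>v\<in>A. c v = k} - (\<Union>k\<in>{0..<N}. {c. \<forall>v\<in>A. c v = k})"
    show "pmf ?P c = 0"
    proof (rule ccontr)
      assume "pmf ?P c \<noteq> 0"
      hence "c \<in> set_pmf ?P" by (simp add: set_pmf_eq)
      hence "\<forall>v\<in>{1..n}. c v < N" using assms(1) by (auto simp: set_coloring PiE_dflt_def)
      moreover obtain k where k: "\<forall>v\<in>A. c v = k" "k \<notin> {0..<N}" using c by blast
      moreover obtain v where "v \<in> A" using assms(3) by blast
      ultimately show False using assms(2) by force
    qed
  qed auto
  also have "\<dots> = (\<Sum>k\<in>{0..<N}. measure_pmf.prob ?P {c. \<forall>v\<in>A. c v = k})"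
    using assms(3) by (intro measure_pmf.finite_measure_finite_Union) (auto simp: disjoint_family_on_def)
  also have "\<dots> = (\<Sum>k\<in>{0..<N}. (1 / real N) ^ card A)"
    using assms by (intro sum.cong refl) (simp add: prob_fix[where f = "\<lambda>_. _", simplified])
  also have "\<dots> = (1 / real N) ^ (card A - 1)"
  proof -
    have "card A = Suc (card A - 1)" using fin assms(3) by (simp add: card_gt_0_iff)
    hence "(1 / real N) ^ card A = (1 / real N) * (1 / real N) ^ (card A - 1)"
      by (metis power_Suc)
    thus ?thesis using assms(1) by simp
  qed
  finally show ?thesis .
qed

lemma prob_mono2:
  assumes "N > 0" "A \<subseteq> {1..n}" "A \<noteq> {}" "B \<subseteq> {1..n}" "B \<noteq> {}" "A \<inter> B = {}"
  shows "measure_pmf.prob (coloring n N) {c. (\<exists>k. \<forall>v\<in>A. c v = k) \<and> (\<exists>k. \<forall>v\<in>B. c v = k)}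
           = (1 / real N) ^ (card A + card B - 2)"
proof -
  let ?P = "coloring n N"
  have finA: "finite A" using assms(2) finite_subset by blast
  have finB: "finite B" using assms(4) finite_subset by blast
  define F where "F = (\<lambda>kk::nat\<times>nat. {c. \<forall>v\<in>A \<union> B. c v = (if v \<in> A then fst kk else snd kk)})"
  have "measure_pmf.prob ?P {c. (\<exists>k. \<forall>v\<in>A. c v = k) \<and> (\<exists>k. \<forall>v\<in>B. c v = k)}
      = measure_pmf.prob ?P (\<Union>kk\<in>{0..<N}\<times>{0..<N}. F kk)"
  proof (rule measure_prob_cong_0)
    fix c assume c: "c \<in> {c. (\<exists>k. \<forall>v\<in>A. c v = k) \<and> (\<exists>k. \<forall>v\<in>B. c v = k)} - (\<Union>kk\<in>{0..<N}\<times>{0..<N}. F kk)"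
    show "pmf ?P c = 0"
    proof (rule ccontr)
      assume "pmf ?P c \<noteq> 0"
      hence "c \<in> set_pmf ?P" by (simp add: set_pmf_eq)
      hence lt: "\<forall>v\<in>{1..n}. c v < N" using assms(1) by (auto simp: set_coloring PiE_dflt_def)
      have cn: "c \<notin> (\<Union>kk\<in>{0..<N}\<times>{0..<N}. F kk)" using c by (meson DiffD2)
      obtain k k' where k: "\<forall>v\<in>A. c v = k" "\<forall>v\<in>B. c v = k'" using DiffD1[OF c] by (simp only: mem_Collect_eq) blast
      obtain a where a: "a \<in> A" using assms(3) by blast
      obtain b where b: "b \<in> B" using assms(5) by blast
      have "a \<in> {1..n}" using a assms(2) by blast
      hence "c a < N" using lt by blast
      hence "k < N" using a k(1) by simp
      have "b \<in> {1..n}" using b assms(4) by blast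
      hence "c b < N" using lt by blast
      hence "k' < N" using b k(2) by simp
      have "(k, k') \<in> {0..<N}\<times>{0..<N}" using \<open>k < N\<close> \<open>k' < N\<close> by simp
      moreover have "c \<in> F (k, k')" using k assms(6) by (auto simp: F_def)
      ultimately have "c \<in> (\<Union>kk\<in>{0..<N}\<times>{0..<N}. F kk)" by (rule UN_I)
      with cn show False by (rule notE)
    qed
  next
    fix c assume c: "c \<in> (\<Union>kk\<in>{0..<N}\<times>{0..<N}. F kk) - {c. (\<exists>k. \<forall>v\<in>A. c v = k) \<and> (\<exists>k. \<forall>v\<in>B. c v = k)}"
    then obtain k k' where "c \<in> F (k, k')" by (simp only: Diff_iff UN_iff) blast
    hence "(\<forall>v\<in>A. c v = k) \<and> (\<forall>v\<in>B. c v = k')" using assms(6) by (auto simp: F_def)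
    hence "c \<in> {c. (\<exists>k. \<forall>v\<in>A. c v = k) \<and> (\<exists>k. \<forall>v\<in>B. c v = k)}" by blast
    thus "pmf ?P c = 0" by (rule DiffD2[OF c])
  qed
  also have "\<dots> = (\<Sum>kk\<in>{0..<N}\<times>{0..<N}. measure_pmf.prob ?P (F kk))"
  proof (intro measure_pmf.finite_measure_finite_Union)
    have "F kk \<inter> F jj = {}" if "kk \<noteq> jj" for kk jj
    proof -
      obtain a where a: "a \<in> A" using assms(3) by blast
      obtain b where b: "b \<in> B" using assms(5) by blast
      have "b \<notin> A" using b assms(6) by blast
      show "F kk \<inter> F jj = {}"
      proof (rule ccontr)
        assume "F kk \<inter> F jj \<noteq> {}"
        then obtain c where c1: "c \<in> F kk" and c2: "c \<in> F jj" by blast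
        have "c a = fst kk" using c1 a by (simp add: F_def)
        moreover have "c a = fst jj" using c2 a by (simp add: F_def)
        moreover have "c b = snd kk" using c1 b \<open>b \<notin> A\<close> by (simp add: F_def)
        moreover have "c b = snd jj" using c2 b \<open>b \<notin> A\<close> by (simp add: F_def)
        ultimately have "fst kk = fst jj" "snd kk = snd jj" by simp_all
        with \<open>kk \<noteq> jj\<close> show False by (simp add: prod_eq_iff)
      qed
    qed
    thus "disjoint_family_on F ({0..<N} \<times> {0..<N})"
      unfolding disjoint_family_on_def by blast
  qed auto
  also have "\<dots> = (\<Sum>kk\<in>{0..<N}\<times>{0..<N}. (1 / real N) ^ (card A + card B))"
  proof (intro sum.cong refl)
    fix kk assume kk: "kk \<in> {0..<N}\<times>{0..<N}"
    have "measure_pmf.prob ?P (F kk) = (1 / real N) ^ card (A \<union> B)"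
      unfolding F_def using assms kk by (intro prob_fix) auto
    thus "measure_pmf.prob ?P (F kk) = (1 / real N) ^ (card A + card B)"
      using finA finB assms(6) by (simp add: card_Un_disjoint)
  qed
  also have "\<dots> = (1 / real N) ^ (card A + card B - 2)"
  proof -
    have "card A \<ge> 1" "card B \<ge> 1" using finA finB assms(3,5) by (auto simp: Suc_le_eq card_gt_0_iff)
    hence "card A + card B = Suc (Suc (card A + card B - 2))" by simp
    hence "(1 / real N) ^ (card A + card B) = (1 / real N) * ((1 / real N) * (1 / real N) ^ (card A + card B - 2))"
      by (metis power_Suc)
    thus ?thesis using assms(1) by simp
  qed
  finally show ?thesis .
qed


lemma tri_props:
  assumes "S \<in> triangles n E"
  shows "S \<subseteq> {1..n}" "card S = 3" "finite S" "S \<noteq> {}"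
    "\<And>x y. x \<in> S \<Longrightarrow> y \<in> S \<Longrightarrow> x \<noteq> y \<Longrightarrow> {x, y} \<in> E"
  using assms by (auto simp: triangles_def intro: card_ge_0_finite)

lemma finite_triangles: "finite (triangles n E)"
proof -
  have "triangles n E \<subseteq> Pow {1..n}" by (auto simp: triangles_def)
  thus ?thesis by (rule finite_subset) simp
qed

lemma pair_prob:
  assumes N: "N > 0" and S: "S \<in> triangles n E" and S': "S' \<in> triangles n E"
  shows "measure_pmf.prob (coloring n N) {c. (\<exists>k. \<forall>v\<in>S. c v = k) \<and> (\<exists>k. \<forall>v\<in>S'. c v = k)}
     \<le> (1 / real N) ^ 4 + (if S = S' then (1 / real N)^2 else 0)
        + (if card (S \<inter> S') = 2 then (1 / real N)^3 else 0)"
proof -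
  let ?q = "1 / real N"
  have q0: "0 \<le> ?q" and q1: "?q \<le> 1" using N by auto
  note s = tri_props[OF S] and s' = tri_props[OF S']
  show ?thesis
  proof (cases "S \<inter> S' = {}")
    case True
    have "measure_pmf.prob (coloring n N) {c. (\<exists>k. \<forall>v\<in>S. c v = k) \<and> (\<exists>k. \<forall>v\<in>S'. c v = k)}
       = ?q ^ (card S + card S' - 2)"
      using True s s' N by (intro prob_mono2) auto
    also have "\<dots> = ?q ^ 4" using s s' by simp
    finally show ?thesis using q0 by (auto simp: card_gt_0_iff)
  next
    case False
    then obtain x where x: "x \<in> S" "x \<in> S'" by blast
    have eq: "{c. (\<exists>k. \<forall>v\<in>S. c v = k) \<and> (\<exists>k. \<forall>v\<in>S'. c v = k)} = {c. \<exists>k. \<forall>v\<in>S \<union> S'. c v = k}"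
    proof (intro equalityI subsetI)
      fix c assume "c \<in> {c. (\<exists>k. \<forall>v\<in>S. c v = k) \<and> (\<exists>k. \<forall>v\<in>S'. c v = k)}"
      then obtain k k' where k: "\<forall>v\<in>S. c v = k" "\<forall>v\<in>S'. c v = k'" by blast
      have "k = k'" using k x by metis
      with k show "c \<in> {c. \<exists>k. \<forall>v\<in>S \<union> S'. c v = k}" by blast
    qed blast
    have pr: "measure_pmf.prob (coloring n N) {c. (\<exists>k. \<forall>v\<in>S. c v = k) \<and> (\<exists>k. \<forall>v\<in>S'. c v = k)}
       = ?q ^ (card (S \<union> S') - 1)"
      unfolding eq using s s' N by (intro prob_mono) auto
    have cu: "card (S \<union> S') + card (S \<inter> S') = 6"
      using card_Un_Int[of S S'] s s' by simp
    have ci1: "card (S \<inter> S') \<ge> 1" using x s by (auto simp: Suc_le_eq card_gt_0_iff)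
    have ci3: "card (S \<inter> S') \<le> 3" using s card_mono[of S "S \<inter> S'"] by auto
    consider "card (S \<inter> S') = 1" | "card (S \<inter> S') = 2" | "card (S \<inter> S') = 3" using ci1 ci3 by linarith
    thus ?thesis
    proof cases
      case 1
      hence "card (S \<union> S') - 1 = 4" using cu by simp
      thus ?thesis using pr q0 by simp
    next
      case 2
      hence "card (S \<union> S') - 1 = 3" using cu by simp
      moreover have "?q ^ 3 \<le> ?q ^ 4 + ?q ^ 3" using q0 by simp
      moreover have "0 \<le> (if S = S' then ?q^2 else 0)" by simp
      ultimately show ?thesis using pr 2 by simp
    next
      case 3
      have "S \<inter> S' = S" using card_subset_eq[of S "S \<inter> S'"] s 3 by auto
      moreover have "S \<inter> S' = S'" using card_subset_eq[of S' "S \<inter> S'"] s' 3 by auto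
      ultimately have "S = S'" by simp
      hence "card (S \<union> S') - 1 = 2" using s by simp
      moreover have "?q ^ 2 \<le> ?q ^ 4 + ?q ^ 2" using q0 by simp
      ultimately show ?thesis using pr 3 \<open>S = S'\<close> by simp
    qed
  qed
qed

lemma count_bound:
  assumes G: "simple_graph_on n E" and S: "S \<in> triangles n E"
  shows "card {S' \<in> triangles n E. card (S \<inter> S') = 2} \<le> 3 * max_edge_tri n E"
proof -
  note s = tri_props[OF S]
  have finE: "finite E"
  proof -
    have "E \<subseteq> Pow {1..n}" using G by (auto simp: simple_graph_on_def)
    thus ?thesis by (rule finite_subset) simp
  qed
  let ?I = "{e. e \<subseteq> S \<and> card e = 2}"
  have finI: "finite ?I" using s(3) by simp
  have cardI: "card ?I = 3" using n_subsets[OF s(3), of 2] s(2) by (simp add: numeral_eq_Suc)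
  have sub: "{S' \<in> triangles n E. card (S \<inter> S') = 2} \<subseteq> (\<Union>e\<in>?I. {S' \<in> triangles n E. e \<subseteq> S'})"
  proof
    fix S' assume h: "S' \<in> {S' \<in> triangles n E. card (S \<inter> S') = 2}"
    have "S \<inter> S' \<in> ?I" using h by simp
    moreover have "S' \<in> {X \<in> triangles n E. S \<inter> S' \<subseteq> X}" using h by simp
    ultimately show "S' \<in> (\<Union>e\<in>?I. {S' \<in> triangles n E. e \<subseteq> S'})" by (rule UN_I)
  qed
  have each: "card {S' \<in> triangles n E. e \<subseteq> S'} \<le> max_edge_tri n E" if e: "e \<in> ?I" for e
  proof -
    obtain x y where xy: "x \<noteq> y" "e = {x, y}" using e by (auto simp: card_2_iff)
    have "e \<in> E" using xy e s(5) by auto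
    hence "edge_tri_count n E e \<le> Max (edge_tri_count n E ` E)" using finE by simp
    thus ?thesis using \<open>e \<in> E\<close> by (auto simp: max_edge_tri_def edge_tri_count_def)
  qed
  have "card {S' \<in> triangles n E. card (S \<inter> S') = 2} \<le> card (\<Union>e\<in>?I. {S' \<in> triangles n E. e \<subseteq> S'})"
    by (intro card_mono sub) (auto intro: finite_subset[OF _ finite_triangles])
  also have "\<dots> \<le> (\<Sum>e\<in>?I. card {S' \<in> triangles n E. e \<subseteq> S'})"
    by (rule card_UN_le[OF finI])
  also have "\<dots> \<le> (\<Sum>e\<in>?I. max_edge_tri n E)" by (intro sum_mono each)
  also have "\<dots> = 3 * max_edge_tri n E" using cardI by simp
  finally show ?thesis .
qed


lemma main_bound:
  assumes G: "simple_graph_on n E" and N: "N > 0" and tp: "num_triangles n E > 0" and eps: "\<epsilon> > 0"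
  shows "measure_pmf.prob (coloring n N)
            {c. \<bar>real (mono_triangles n E c)
                 - measure_pmf.expectation (coloring n N) (\<lambda>c. real (mono_triangles n E c))\<bar>
               \<ge> \<epsilon> * measure_pmf.expectation (coloring n N) (\<lambda>c. real (mono_triangles n E c))}
     \<le> (real (num_triangles n E) * (1 / real N)^2
         + 3 * real (num_triangles n E) * real (max_edge_tri n E) * (1 / real N)^3)
       / (\<epsilon> * real (num_triangles n E) * (1 / real N)^2)^2"
proof -
  define P where "P = coloring n N"
  define T where "T = (\<lambda>c. real (mono_triangles n E c))"
  define tri where "tri = triangles n E"
  define q where "q = 1 / real N"
  define t where "t = real (num_triangles n E)"
  define D where "D = real (max_edge_tri n E)"
  define mono where "mono = (\<lambda>S. {c::nat\<Rightarrow>nat. \<exists>k. \<forall>v\<in>S. c v = k})"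
  have fintri: "finite tri" unfolding tri_def by (rule finite_triangles)
  have t_eq: "t = real (card tri)" by (simp add: t_def tri_def num_triangles_def)
  have q0: "0 < q" using N by (simp add: q_def)
  have t0: "0 < t" using tp by (simp add: t_def)
  have integ: "integrable (measure_pmf P) f" for f :: "(nat \<Rightarrow> nat) \<Rightarrow> real"
    unfolding P_def by (rule integrable_measure_pmf_finite[OF finite_set_coloring[OF N]])
  have T_eq: "T c = (\<Sum>S\<in>tri. indicator (mono S) c)" for c
  proof -
    have "T c = real (card {S \<in> tri. \<exists>k. \<forall>v\<in>S. c v = k})"
      by (simp add: T_def mono_triangles_def tri_def)
    also have "\<dots> = (\<Sum>S\<in>{S \<in> tri. \<exists>k. \<forall>v\<in>S. c v = k}. 1)" by simp
    also have "\<dots> = (\<Sum>S\<in>tri. if (\<exists>k. \<forall>v\<in>S. c v = k) then 1 else 0)"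
      by (rule sum.inter_filter[OF fintri])
    also have "\<dots> = (\<Sum>S\<in>tri. indicator (mono S) c)"
      by (intro sum.cong refl) (simp add: indicator_def mono_def)
    finally show ?thesis .
  qed
  have Tfun: "T = (\<lambda>c. \<Sum>S\<in>tri. indicator (mono S) c)" by (rule ext) (rule T_eq)
  have ES: "measure_pmf.expectation P (indicator (mono S)) = q^2" if S: "S \<in> tri" for S
  proof -
    note s = tri_props[OF S[unfolded tri_def]]
    have "measure_pmf.expectation P (indicator (mono S)) = measure_pmf.prob P (mono S)" by simp
    also have "\<dots> = q ^ (card S - 1)" unfolding P_def mono_def q_def
      using N s by (intro prob_mono) auto
    also have "\<dots> = q^2" using s by simp
    finally show ?thesis .
  qed
  have mu: "measure_pmf.expectation P T = t * q^2"
  proof -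
    have "measure_pmf.expectation P T = measure_pmf.expectation P (\<lambda>c. \<Sum>S\<in>tri. indicator (mono S) c)"
      by (simp only: Tfun)
    also have "\<dots> = (\<Sum>S\<in>tri. measure_pmf.expectation P (indicator (mono S)))"
      by (rule Bochner_Integration.integral_sum) (rule integ)
    also have "\<dots> = (\<Sum>S\<in>tri. q^2)" by (intro sum.cong refl ES)
    also have "\<dots> = t * q^2" by (simp add: t_eq)
    finally show ?thesis .
  qed
  have ET2: "measure_pmf.expectation P (\<lambda>c. (T c)^2) \<le> t^2 * q^4 + t * q^2 + 3 * t * D * q^3"
  proof -
    have "measure_pmf.expectation P (\<lambda>c. (T c)^2)
        = measure_pmf.expectation P (\<lambda>c. \<Sum>S\<in>tri. \<Sum>S'\<in>tri. indicator (mono S \<inter> mono S') c)"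
      by (simp add: Tfun power2_eq_square sum_product indicator_inter_arith)
    also have "\<dots> = (\<Sum>S\<in>tri. \<Sum>S'\<in>tri. measure_pmf.prob P (mono S \<inter> mono S'))"
      by (simp add: Bochner_Integration.integral_sum integ)
    also have "\<dots> \<le> (\<Sum>S\<in>tri. \<Sum>S'\<in>tri. q^4 + (if S = S' then q^2 else 0)
                       + (if card (S \<inter> S') = 2 then q^3 else 0))"
    proof (intro sum_mono)
      fix S S' assume "S \<in> tri" "S' \<in> tri"
      have eq: "mono S \<inter> mono S' = {c. (\<exists>k. \<forall>v\<in>S. c v = k) \<and> (\<exists>k. \<forall>v\<in>S'. c v = k)}"
        by (auto simp: mono_def)
      have "measure_pmf.prob P (mono S \<inter> mono S') = measure_pmf.prob (coloring n N) {c. (\<exists>k. \<forall>v\<in>S. c v = k) \<and> (\<exists>k. \<forall>v\<in>S'. c v = k)}"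
        by (simp only: eq P_def)
      also have "\<dots> \<le> (1 / real N) ^ 4 + (if S = S' then (1 / real N)^2 else 0)
        + (if card (S \<inter> S') = 2 then (1 / real N)^3 else 0)"
        by (rule pair_prob[OF N]) (use \<open>S \<in> tri\<close> \<open>S' \<in> tri\<close> in \<open>simp_all add: tri_def\<close>)
      finally show "measure_pmf.prob P (mono S \<inter> mono S') \<le> q^4 + (if S = S' then q^2 else 0)
                       + (if card (S \<inter> S') = 2 then q^3 else 0)"
        by (simp only: q_def)
    qed
    also have "\<dots> = (\<Sum>S\<in>tri. (\<Sum>S'\<in>tri. q^4) + (\<Sum>S'\<in>tri. if S = S' then q^2 else 0)
                       + (\<Sum>S'\<in>tri. if card (S \<inter> S') = 2 then q^3 else 0))"
      by (simp add: sum.distrib)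
    also have "\<dots> = (\<Sum>S\<in>tri. t * q^4 + q^2
                       + q^3 * real (card {S'\<in>tri. card (S \<inter> S') = 2}))"
      using fintri by (intro sum.cong refl) (simp add: t_eq sum.If_cases Int_def)
    also have "\<dots> \<le> (\<Sum>S\<in>tri. t * q^4 + q^2 + q^3 * (3 * D))"
    proof (intro sum_mono add_left_mono mult_left_mono)
      fix S assume "S \<in> tri"
      show "real (card {S'\<in>tri. card (S \<inter> S') = 2}) \<le> 3 * D"
        using count_bound[OF G, of S] \<open>S \<in> tri\<close> unfolding D_def tri_def by linarith
    qed (use q0 in simp)
    also have "\<dots> = t^2 * q^4 + t * q^2 + 3 * t * D * q^3"
      by (simp add: t_eq power2_eq_square algebra_simps)
    finally show ?thesis .
  qed
  have var: "measure_pmf.variance P T \<le> t * q^2 + 3 * t * D * q^3"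
  proof -
    have "measure_pmf.variance P T = measure_pmf.expectation P (\<lambda>c. (T c)^2) - (measure_pmf.expectation P T)^2"
      by (rule measure_pmf.variance_eq) (rule integ)+
    also have "\<dots> = measure_pmf.expectation P (\<lambda>c. (T c)^2) - t^2 * q^4"
      by (simp only: mu power_mult_distrib power_mult[symmetric]) simp
    finally show ?thesis using ET2 by linarith
  qed
  have pos: "\<epsilon> * (t * q^2) > 0" using eps t0 q0 by simp
  have "measure_pmf.prob P {c \<in> space (measure_pmf P). \<bar>T c - measure_pmf.expectation P T\<bar> \<ge> \<epsilon> * (t * q^2)}
        \<le> measure_pmf.variance P T / (\<epsilon> * (t * q^2))^2"
    by (rule measure_pmf.Chebyshev_inequality) (use pos integ in auto)
  also have "\<dots> \<le> (t * q^2 + 3 * t * D * q^3) / (\<epsilon> * (t * q^2))^2"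
    by (rule divide_right_mono[OF var]) simp
  finally show ?thesis
    by (simp add: P_def T_def mu[unfolded P_def T_def] t_def q_def D_def mult.assoc)
qed


lemma ineq:
  fixes t q D L \<epsilon> :: real
  assumes t: "t > 0" and q: "q > 0" and D: "D \<ge> 0" and L: "L > 0" and e: "\<epsilon> > 0"
    and h1: "q \<ge> D * L / t" and h2: "q \<ge> L / sqrt t"
  shows "(t*q^2 + 3*t*D*q^3)/(\<epsilon>*t*q^2)^2 \<le> (1/\<epsilon>^2) * (1/L^2 + 3/L)"
proof -
  have eq: "(t*q^2 + 3*t*D*q^3)/(\<epsilon>*t*q^2)^2 = (1/\<epsilon>^2) * (1/(t*q^2) + 3 * (D/(t*q)))"
    using t q e by (simp add: field_simps power2_eq_square power3_eq_cube power4_eq_xxxx)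
  have "L \<le> q * sqrt t" using h2 t by (simp add: divide_le_eq mult.commute)
  hence "L^2 \<le> (q * sqrt t)^2" using L by (intro power_mono) auto
  hence a: "L^2 \<le> t * q^2" using t by (simp add: power_mult_distrib mult.commute)
  have b1: "1/(t*q^2) \<le> 1/L^2" using a L t q by (intro divide_left_mono) auto
  have "D * L \<le> q * t" using h1 t by (simp add: divide_le_eq)
  hence b2: "D/(t*q) \<le> 1/L" using t q L by (simp add: divide_simps mult.commute)
  have "1/(t*q^2) + 3 * (D/(t*q)) \<le> 1/L^2 + 3/L" using b1 b2 by simp
  thus ?thesis unfolding eq using e by (intro mult_left_mono) auto
qed

lemma lim0: "(\<lambda>n::nat. 1/(ln (real n))^2 + 3/ln (real n)) \<longlonglongrightarrow> 0"
  by real_asymp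


theorem theorem2:
  fixes G :: "nat \<Rightarrow> nat set set" and N :: "nat \<Rightarrow> nat"
  assumes graph: "\<And>n. simple_graph_on n (G n)"
    and Npos: "\<And>n. N n > 0"
    and tpos: "eventually (\<lambda>n. num_triangles n (G n) > 0) at_top"
    and pbound: "eventually (\<lambda>n. 1 / real (N n) \<ge>
        max (real (max_edge_tri n (G n)) * ln (real n) / real (num_triangles n (G n)))
            (ln (real n) / sqrt (real (num_triangles n (G n))))) at_top"
    and eps: "\<epsilon> > 0"
  shows "(\<lambda>n. measure_pmf.prob (coloring n (N n))
            {c. \<bar>real (mono_triangles n (G n) c)
                 - measure_pmf.expectation (coloring n (N n)) (\<lambda>c. real (mono_triangles n (G n) c))\<bar>
               \<ge> \<epsilon> * measure_pmf.expectation (coloring n (N n)) (\<lambda>c. real (mono_triangles n (G n) c))})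
         \<longlonglongrightarrow> 0"
proof -
  define B where "B = (\<lambda>n::nat. (1/\<epsilon>^2) * (1/(ln (real n))^2 + 3/ln (real n)))"
  have limB: "B \<longlonglongrightarrow> 0"
    unfolding B_def using tendsto_mult[OF tendsto_const lim0, of "1/\<epsilon>^2"] by simp
  show ?thesis
  proof (rule tendsto_sandwich[of "\<lambda>n. 0" _ _ B])
    show "eventually (\<lambda>n. 0 \<le> measure_pmf.prob (coloring n (N n))
            {c. \<bar>real (mono_triangles n (G n) c)
                 - measure_pmf.expectation (coloring n (N n)) (\<lambda>c. real (mono_triangles n (G n) c))\<bar>
               \<ge> \<epsilon> * measure_pmf.expectation (coloring n (N n)) (\<lambda>c. real (mono_triangles n (G n) c))}) sequentially"
      by simp
    show "eventually (\<lambda>n. measure_pmf.prob (coloring n (N n))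
            {c. \<bar>real (mono_triangles n (G n) c)
                 - measure_pmf.expectation (coloring n (N n)) (\<lambda>c. real (mono_triangles n (G n) c))\<bar>
               \<ge> \<epsilon> * measure_pmf.expectation (coloring n (N n)) (\<lambda>c. real (mono_triangles n (G n) c))} \<le> B n) sequentially"
      using tpos pbound eventually_ge_at_top[of "3::nat"]
    proof eventually_elim
      case (elim n)
      define t where "t = real (num_triangles n (G n))"
      define q where "q = 1 / real (N n)"
      define D where "D = real (max_edge_tri n (G n))"
      define L where "L = ln (real n)"
      have L: "L > 0" using elim(3) by (simp add: L_def)
      have t: "t > 0" using elim(1) by (simp add: t_def)
      have q: "q > 0" using Npos[of n] by (simp add: q_def)
      have h1: "q \<ge> D * L / t" and h2: "q \<ge> L / sqrt t"
        using elim(2) by (simp_all add: q_def D_def L_def t_def)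
      have "measure_pmf.prob (coloring n (N n))
            {c. \<bar>real (mono_triangles n (G n) c)
                 - measure_pmf.expectation (coloring n (N n)) (\<lambda>c. real (mono_triangles n (G n) c))\<bar>
               \<ge> \<epsilon> * measure_pmf.expectation (coloring n (N n)) (\<lambda>c. real (mono_triangles n (G n) c))}
         \<le> (t*q^2 + 3*t*D*q^3)/(\<epsilon>*t*q^2)^2"
        unfolding t_def q_def D_def by (rule main_bound[OF graph Npos elim(1) eps])
      also have "\<dots> \<le> (1/\<epsilon>^2) * (1/L^2 + 3/L)"
        by (rule ineq[OF t q _ L eps h1 h2]) (simp add: D_def)
      finally show ?case by (simp add: B_def L_def)
    qed
  qed (auto intro: limB)
qed


end
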